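(* Let $n \geq 1$ and $z \geq 2$ be integers, and let $\epsilon > 0$ be a constant. Let $\mathbf{f}_1^{(0)}, \dots, \mathbf{f}_n^{(0)}$ be arbitrary probability vectors in $\mathbb{R}^z$. For $t \geq 1$ define recursively, for all $i, j \in \{1,\dots,n\}$, $$p_{i,j}^{(t)} = \frac{\alpha_i^{(t)}}{\epsilon + D\left(\mathbf{f}_i^{(t-1)}, \mathbf{f}_j^{(t-1)}\right)}, \qquad \mathbf{f}_i^{(t)} = \sum_{j=1}^n p_{i,j}^{(t)} \mathbf{f}_j^{(t-1)},$$ where $\alpha_i^{(t)} > 0$ is the normalizing constant chosen so that $\sum_{j=1}^n p_{i,j}^{(t)} = 1$, and $D(\mathbf{u}, \mathbf{v}) = \sqrt{\frac{1}{z}\sum_{k=1}^{z} (u_k - v_k)^2}$. Then for every $i, j \in \{1,\dots,n\}$, $p_{i,j}^{(t)} \to \frac{1}{n}$ as $t \to \infty$.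
   Context: The vectors $\mathbf{f}_i^{(t)}$ represent the probabilistic opinion of expert $i$ after $t$ revisions; $p_{i,j}^{(t)}$ is the weight expert $i$ assigns to expert $j$'s opinion at revision $t$. *)

theory Defs
  imports "HOL-Analysis.Analysis"
begin

text \<open>Vectors in R^z are functions nat => real, with coordinates indexed by k < z
  (coordinate k corresponds to the paper's k+1). Experts are indexed by i < n.\<close>

definition dist_D :: "nat \<Rightarrow> (nat \<Rightarrow> real) \<Rightarrow> (nat \<Rightarrow> real) \<Rightarrow> real" where
  "dist_D z u v = sqrt ((1 / real z) * (\<Sum>k<z. (u k - v k)^2))"

definition prob_vec :: "nat \<Rightarrow> (nat \<Rightarrow> real) \<Rightarrow> bool" where
  "prob_vec z u \<longleftrightarrow> (\<forall>k<z. u k \<ge> 0) \<and> (\<Sum>k<z. u k) = 1"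

definition weight :: "nat \<Rightarrow> nat \<Rightarrow> real \<Rightarrow> (nat \<Rightarrow> nat \<Rightarrow> real) \<Rightarrow> nat \<Rightarrow> nat \<Rightarrow> real" where
  "weight n z eps f i j =
     (1 / (\<Sum>l<n. 1 / (eps + dist_D z (f i) (f l)))) / (eps + dist_D z (f i) (f j))"

fun opinions :: "nat \<Rightarrow> nat \<Rightarrow> real \<Rightarrow> (nat \<Rightarrow> nat \<Rightarrow> real) \<Rightarrow> nat \<Rightarrow> nat \<Rightarrow> nat \<Rightarrow> real" where
  "opinions n z eps f0 0 = f0"
| "opinions n z eps f0 (Suc t) =
     (\<lambda>i k. \<Sum>j<n. weight n z eps (opinions n z eps f0 t) i j * opinions n z eps f0 t j k)"

text \<open>pw t i j = p_{i,j}^{(t)} for t >= 1\<close>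
definition pweight :: "nat \<Rightarrow> nat \<Rightarrow> real \<Rightarrow> (nat \<Rightarrow> nat \<Rightarrow> real) \<Rightarrow> nat \<Rightarrow> nat \<Rightarrow> nat \<Rightarrow> real" where
  "pweight n z eps f0 t i j = weight n z eps (opinions n z eps f0 (t - 1)) i j"

end

theory Submission
  imports Defs
begin

lemma dist_D_nonneg: "dist_D z u v \<ge> 0"
  unfolding dist_D_def by (simp add: sum_nonneg)

lemma S_pos:
  fixes n :: nat
  assumes "eps > 0" "n \<ge> 1"
  shows "(\<Sum>l<n. 1 / (eps + dist_D z (f i) (f l))) > 0"
proof -
  have "\<And>l. 1 / (eps + dist_D z (f i) (f l)) > 0"
    using assms dist_D_nonneg[of z] by (simp add: add_pos_nonneg)
  moreover have "0 \<in> {..<n}" using assms by auto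
  then have "{..<n} \<noteq> {}" by blast
  ultimately show ?thesis by (intro sum_pos) auto
qed

lemma weight_pos:
  assumes "eps > 0" "n \<ge> 1"
  shows "weight n z eps f i j > 0"
  using S_pos[OF assms, of z f i] dist_D_nonneg[of z "f i" "f j"] assms
  unfolding weight_def by (simp add: add_pos_nonneg)

lemma weight_sum:
  assumes "eps > 0" "n \<ge> 1"
  shows "(\<Sum>j<n. weight n z eps f i j) = 1"
proof -
  let ?S = "(\<Sum>l<n. 1 / (eps + dist_D z (f i) (f l)))"
  have "(\<Sum>j<n. weight n z eps f i j) = (\<Sum>j<n. (1/?S) * (1 / (eps + dist_D z (f i) (f j))))"
    unfolding weight_def by simp
  also have "\<dots> = (1/?S) * ?S" by (simp add: sum_distrib_left)
  also have "\<dots> = 1" using S_pos[OF assms, of z f i] by simp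
  finally show ?thesis .
qed

lemma dist_D_le:
  assumes "\<forall>k<z. \<bar>u k - v k\<bar> \<le> d" "d \<ge> 0"
  shows "dist_D z u v \<le> d"
proof (cases "z = 0")
  case True then show ?thesis using assms by (simp add: dist_D_def)
next
  case False
  have "(\<Sum>k<z. (u k - v k)^2) \<le> (\<Sum>k<z. d^2)"
  proof (intro sum_mono)
    fix k assume "k \<in> {..<z}"
    then have "\<bar>u k - v k\<bar> \<le> d" using assms by auto
    then show "(u k - v k)^2 \<le> d^2"
      by (metis abs_ge_zero power2_abs power_mono)
  qed
  then have "(1 / real z) * (\<Sum>k<z. (u k - v k)^2) \<le> (1 / real z) * (real z * d^2)"
    by (intro mult_left_mono) auto
  also have "\<dots> = d^2" using False by simp
  finally have "sqrt ((1 / real z) * (\<Sum>k<z. (u k - v k)^2)) \<le> sqrt (d^2)"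
    using real_sqrt_le_mono by blast
  then show ?thesis using assms(2) by (simp add: dist_D_def)
qed

lemma weight_lb:
  assumes "eps > 0" "n \<ge> 1" "\<forall>l<n. dist_D z (f i) (f l) \<le> 1" "j < n"
  shows "weight n z eps f i j \<ge> eps / (real n * (eps + 1))"
proof -
  let ?S = "(\<Sum>l<n. 1 / (eps + dist_D z (f i) (f l)))"
  have "?S \<le> (\<Sum>l<n. 1 / eps)"
  proof (intro sum_mono)
    fix l assume "l \<in> {..<n}"
    show "1 / (eps + dist_D z (f i) (f l)) \<le> 1 / eps"
      using assms(1) dist_D_nonneg[of z] by (intro divide_left_mono) (auto simp: add_pos_nonneg)
  qed
  then have S: "?S \<le> real n / eps" by simp
  have Spos: "?S > 0" using S_pos[OF assms(1,2)] .
  have D: "eps + dist_D z (f i) (f j) \<le> eps + 1" using assms by auto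
  have Dp: "eps + dist_D z (f i) (f j) > 0" using assms(1) dist_D_nonneg[of z] by (simp add: add_pos_nonneg)
  have "?S * (eps + dist_D z (f i) (f j)) \<le> (real n / eps) * (eps + 1)"
    using S D Spos Dp by (intro mult_mono) auto
  moreover have "0 < ?S * (eps + dist_D z (f i) (f j))" using Spos Dp by simp
  moreover have "0 < (real n / eps) * (eps + 1)" using assms by simp
  ultimately have "1 / ((real n / eps) * (eps + 1)) \<le> 1 / (?S * (eps + dist_D z (f i) (f j)))"
    by (meson divide_left_mono mult_pos_pos zero_le_one)
  moreover have "1 / ((real n / eps) * (eps + 1)) = eps / (real n * (eps + 1))"
    using assms by (simp add: field_simps)
  ultimately show ?thesis unfolding weight_def by simp
qed

lemma upper:
  fixes w x :: "nat \<Rightarrow> real"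
  assumes "\<forall>j<n. w j \<ge> c" "\<forall>j<n. w j \<ge> 0" "(\<Sum>j<n. w j) = 1" "\<forall>j<n. mn \<le> x j \<and> x j \<le> mx"
    "ja < n" "x ja = mn"
  shows "(\<Sum>j<n. w j * x j) \<le> c*mn + (1-c)*mx"
proof -
  have e1: "(\<Sum>j<n. w j * (mx - x j)) = (\<Sum>j<n. w j * mx) - (\<Sum>j<n. w j * x j)"
    by (simp add: right_diff_distrib sum_subtractf)
  have e2: "(\<Sum>j<n. w j * mx) = mx" using assms(3) by (simp add: sum_distrib_right[symmetric])
  have e: "(\<Sum>j<n. w j * x j) = mx - (\<Sum>j<n. w j * (mx - x j))" using e1 e2 by simp
  have "w ja * (mx - x ja) \<le> (\<Sum>j<n. w j * (mx - x j))"
    using assms(2,4,5) by (intro member_le_sum) auto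
  moreover have "c * (mx - mn) \<le> w ja * (mx - x ja)"
    using assms mult_right_mono[of c "w ja" "mx - mn"] by fastforce
  ultimately show ?thesis using e by (simp add: algebra_simps)
qed

lemma lower:
  fixes w x :: "nat \<Rightarrow> real"
  assumes "\<forall>j<n. w j \<ge> c" "\<forall>j<n. w j \<ge> 0" "(\<Sum>j<n. w j) = 1" "\<forall>j<n. mn \<le> x j \<and> x j \<le> mx"
    "jb < n" "x jb = mx"
  shows "(\<Sum>j<n. w j * x j) \<ge> c*mx + (1-c)*mn"
proof -
  have e1: "(\<Sum>j<n. w j * (x j - mn)) = (\<Sum>j<n. w j * x j) - (\<Sum>j<n. w j * mn)"
    by (simp add: right_diff_distrib sum_subtractf)
  have e2: "(\<Sum>j<n. w j * mn) = mn" using assms(3) by (simp add: sum_distrib_right[symmetric])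
  have e: "(\<Sum>j<n. w j * x j) = mn + (\<Sum>j<n. w j * (x j - mn))" using e1 e2 by simp
  have "w jb * (x jb - mn) \<le> (\<Sum>j<n. w j * (x j - mn))"
    using assms(2,4,5) by (intro member_le_sum) auto
  moreover have "c * (mx - mn) \<le> w jb * (x jb - mn)"
    using assms mult_right_mono[of c "w jb" "mx - mn"] by fastforce
  ultimately show ?thesis using e by (simp add: algebra_simps)
qed

lemma contract:
  fixes w :: "nat \<Rightarrow> nat \<Rightarrow> real" and x :: "nat \<Rightarrow> real"
  assumes "\<forall>i<n. \<forall>j<n. w i j \<ge> c" "\<forall>i<n. \<forall>j<n. w i j \<ge> 0" "\<forall>i<n. (\<Sum>j<n. w i j) = 1"
    "\<forall>i<n. \<forall>l<n. x i - x l \<le> d" "n \<ge> 1" "c \<le> 1" "c \<ge> 0"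
    "i < n" "l < n"
  shows "(\<Sum>j<n. w i j * x j) - (\<Sum>j<n. w l j * x j) \<le> (1 - c) * d"
proof -
  define A where "A = x ` {..<n}"
  have "0 < n" using assms(5) by simp
  then have A: "finite A" "A \<noteq> {}" by (auto simp: A_def)
  obtain j0 where j0: "j0 < n" "x j0 = Min A" using Min_in[OF A] by (auto simp: A_def)
  obtain j1 where j1: "j1 < n" "x j1 = Max A" using Max_in[OF A] by (auto simp: A_def)
  have b: "\<forall>j<n. Min A \<le> x j \<and> x j \<le> Max A" using A by (auto simp: A_def)
  have u: "(\<Sum>j<n. w i j * x j) \<le> c*Min A + (1-c)*Max A"
    using assms(1-3,8) b j0 by (intro upper[where ja=j0]) auto
  have lo: "(\<Sum>j<n. w l j * x j) \<ge> c*Max A + (1-c)*Min A"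
    using assms(1-3,9) b j1 by (intro lower[where jb=j1]) auto
  have md: "Max A - Min A \<le> d" using assms(4) j0 j1 by metis
  have "Max A - Min A \<ge> 0" using b j0 by auto
  then have "(1-2*c) * (Max A - Min A) \<le> (1-c)*(Max A - Min A)"
    using assms(7) by (intro mult_right_mono) auto
  also have "\<dots> \<le> (1-c)*d" using md assms(6) by (intro mult_left_mono) auto
  finally show ?thesis using u lo by (simp add: algebra_simps)
qed

lemma invariant:
  fixes n z :: nat and eps :: real and g :: "nat \<Rightarrow> nat \<Rightarrow> real"
  assumes n: "n \<ge> 1" and eps: "eps > 0"
    and g: "\<And>i. i < n \<Longrightarrow> prob_vec z (g i)"
  defines "c \<equiv> eps / (real n * (eps + 1))"
  shows "(\<forall>i<n. \<forall>k<z. 0 \<le> opinions n z eps g t i k \<and> opinions n z eps g t i k \<le> 1) \<and>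
         (\<forall>k<z. \<forall>i<n. \<forall>l<n. opinions n z eps g t i k - opinions n z eps g t l k \<le> (1 - c)^t)"
proof (induction t)
  case 0
  have b: "\<forall>i<n. \<forall>k<z. 0 \<le> g i k \<and> g i k \<le> 1"
  proof (intro allI impI)
    fix i k assume "i < n" "k < z"
    then have p: "prob_vec z (g i)" using g by auto
    then have "g i k \<le> (\<Sum>k<z. g i k)" using \<open>k < z\<close>
      unfolding prob_vec_def by (intro member_le_sum) auto
    then show "0 \<le> g i k \<and> g i k \<le> 1" using p \<open>k < z\<close> unfolding prob_vec_def by auto
  qed
  show ?case
  proof (intro conjI allI impI)
    fix i k assume "i < n" "k < z"
    then show "0 \<le> opinions n z eps g 0 i k" "opinions n z eps g 0 i k \<le> 1" using b by auto
  next
    fix k i l assume "k < z" "i < n" "l < n"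
    then have "0 \<le> g l k" "g i k \<le> 1" using b by auto
    then show "opinions n z eps g 0 i k - opinions n z eps g 0 l k \<le> (1 - c) ^ 0" by simp
  qed
next
  case (Suc t)
  let ?F = "opinions n z eps g t"
  let ?w = "weight n z eps ?F"
  have wpos: "\<forall>i<n. \<forall>j<n. ?w i j \<ge> 0" using weight_pos[OF eps n] by (simp add: less_imp_le)
  have wsum: "\<forall>i<n. (\<Sum>j<n. ?w i j) = 1" using weight_sum[OF eps n] by simp
  have D1: "\<forall>i<n. \<forall>l<n. dist_D z (?F i) (?F l) \<le> 1"
  proof (intro allI impI)
    fix i l assume "i < n" "l < n"
    have "\<forall>k<z. \<bar>?F i k - ?F l k\<bar> \<le> 1"
    proof (intro allI impI)
      fix k assume "k < z"
      then have "0 \<le> ?F i k" "?F i k \<le> 1" "0 \<le> ?F l k" "?F l k \<le> 1"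
        using Suc.IH \<open>i < n\<close> \<open>l < n\<close> by auto
      then show "\<bar>?F i k - ?F l k\<bar> \<le> 1" unfolding abs_le_iff by linarith
    qed
    then show "dist_D z (?F i) (?F l) \<le> 1" by (intro dist_D_le) auto
  qed
  have wlb: "\<forall>i<n. \<forall>j<n. ?w i j \<ge> c" unfolding c_def using weight_lb[OF eps n] D1 by blast
  have c0: "c \<ge> 0" unfolding c_def using eps by simp
  have c1: "c \<le> 1"
  proof -
    have "eps \<le> real n * (eps + 1)" using n eps
      by (metis add.commute le_add_same_cancel2 less_eq_real_def mult_1 mult_right_mono of_nat_1 of_nat_mono order.trans zero_le_one)
    then show ?thesis unfolding c_def using eps by (simp add: divide_le_eq)
  qed
  have step: "\<And>i k. opinions n z eps g (Suc t) i k = (\<Sum>j<n. ?w i j * ?F j k)" by simp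
  show ?case
  proof (intro conjI allI impI)
    fix i k assume ik: "i < n" "k < z"
    have "0 \<le> (\<Sum>j<n. ?w i j * ?F j k)" using wpos Suc.IH ik by (intro sum_nonneg) auto
    moreover have "(\<Sum>j<n. ?w i j * ?F j k) \<le> (\<Sum>j<n. ?w i j * 1)"
      using wpos Suc.IH ik by (intro sum_mono mult_left_mono) auto
    ultimately show "0 \<le> opinions n z eps g (Suc t) i k" "opinions n z eps g (Suc t) i k \<le> 1"
      using wsum ik by (simp_all only: step) simp
  next
    fix k i l assume kil: "k < z" "i < n" "l < n"
    have "(\<Sum>j<n. ?w i j * ?F j k) - (\<Sum>j<n. ?w l j * ?F j k) \<le> (1 - c) * (1 - c)^t"
      using Suc.IH kil wlb wpos wsum n c1 c0 by (intro contract) auto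
    then show "opinions n z eps g (Suc t) i k - opinions n z eps g (Suc t) l k \<le> (1 - c) ^ Suc t"
      by (simp only: step) simp
  qed
qed

theorem corollary1:
  fixes n z :: nat and eps :: real and f0 :: "nat \<Rightarrow> nat \<Rightarrow> real"
  assumes "n \<ge> 1" and "z \<ge> 2" and "eps > 0"
    and "\<And>i. i < n \<Longrightarrow> prob_vec z (f0 i)"
    and "i < n" and "j < n"
  shows "(\<lambda>t. pweight n z eps f0 t i j) \<longlonglongrightarrow> 1 / real n"
proof -
  define c where "c = eps / (real n * (eps + 1))"
  let ?F = "opinions n z eps f0"
  have inv: "\<And>t. \<forall>k<z. \<forall>i<n. \<forall>l<n. ?F t i k - ?F t l k \<le> (1 - c)^t"
    using invariant[where n=n and z=z and eps=eps and g=f0] assms unfolding c_def by blast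
  have c0: "c > 0" unfolding c_def using assms by simp
  have c1: "c \<le> 1"
  proof -
    have "eps \<le> real n * (eps + 1)" using assms
      by (metis add.commute le_add_same_cancel2 less_eq_real_def mult_1 mult_right_mono of_nat_1 of_nat_mono order.trans zero_le_one)
    then show ?thesis unfolding c_def using assms by (simp add: divide_le_eq)
  qed
  have q: "(\<lambda>t. (1 - c)^t) \<longlonglongrightarrow> 0" using c0 c1 by (intro LIMSEQ_power_zero) simp
  have Dlim: "(\<lambda>t. dist_D z (?F t i) (?F t l)) \<longlonglongrightarrow> 0" if "l < n" for l
  proof (rule real_tendsto_sandwich[where f="\<lambda>_. 0" and h="\<lambda>t. (1 - c)^t"])
    show "\<forall>\<^sub>F t in sequentially. 0 \<le> dist_D z (?F t i) (?F t l)" by (simp add: dist_D_nonneg)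
    show "\<forall>\<^sub>F t in sequentially. dist_D z (?F t i) (?F t l) \<le> (1 - c)^t"
    proof (intro always_eventually allI)
      fix t
      have "\<forall>k<z. \<bar>?F t i k - ?F t l k\<bar> \<le> (1 - c)^t"
      proof (intro allI impI)
        fix k assume "k < z"
        then have "?F t i k - ?F t l k \<le> (1 - c)^t" "?F t l k - ?F t i k \<le> (1 - c)^t"
          using inv[of t] assms(5) that by auto
        then show "\<bar>?F t i k - ?F t l k\<bar> \<le> (1 - c)^t" unfolding abs_le_iff by linarith
      qed
      moreover have "0 \<le> (1 - c)^t" using c1 by simp
      ultimately show "dist_D z (?F t i) (?F t l) \<le> (1 - c)^t" by (rule dist_D_le)
    qed
  qed (use q in auto)
  have "(\<lambda>t. weight n z eps (?F t) i j) \<longlonglongrightarrow>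
        (1 / (\<Sum>l<n. 1 / (eps + 0))) / (eps + 0)"
    unfolding weight_def using assms Dlim
    by (intro tendsto_intros) auto
  moreover have "(1 / (\<Sum>l<n. 1 / (eps + 0))) / (eps + 0) = 1 / real n"
    using assms by simp
  ultimately have "(\<lambda>t. pweight n z eps f0 (Suc t) i j) \<longlonglongrightarrow> 1 / real n"
    unfolding pweight_def by simp
  then show ?thesis by (rule LIMSEQ_imp_Suc)
qed

end
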